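(* Let $r>1$ and let $k,\ell,m$ be arbitrary positive integers. Let $x_0$ be chosen uniformly at random from the vertex set of the $(k,\ell,m)$-megastar and run the Moran process with fitness $r$ on it with initial mutant $x_0$. Then the process goes extinct with probability at least $k/(2r(m+k))$.
   Context: Moran process: given a directed graph $G$ and fitness $r$, one vertex $x_0$ is a mutant, the rest non-mutants. At each step a vertex $v$ is chosen with probability proportional to fitness (mutants $r$, non-mutants $1$), an out-neighbour $w$ of $v$ is chosen uniformly at random and the state of $v$ is copied to $w$. Extinction: eventually no vertex is a mutant. The $(k,\ell,m)$-megastar: disjoint union of reservoirs $R_1,\dots,R_\ell$ (size $m$), cliques $K_1,\dots,K_\ell$ (size $k$), feeders $a_1,\dots,a_\ell$, and centre $v^*$; edges from $v^*$ to all reservoir vertices, from each vertex of $R_i$ to $a_i$, from $a_i$ to each vertex of $K_i$, both directions between distinct vertices of each $K_i$, and from every clique vertex to $v^*$. *)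

theory Defs
  imports Complex_Main
begin

text \<open>A directed graph is given by a finite vertex set V and an edge relation E
  (pairs (v,w) meaning an edge from v to w). A state of the Moran process is the
  set S of mutant vertices.\<close>

definition out_nbrs :: "'a set \<Rightarrow> ('a \<times> 'a) set \<Rightarrow> 'a \<Rightarrow> 'a set" where
  "out_nbrs V E v = {w \<in> V. (v, w) \<in> E}"

definition fitness :: "real \<Rightarrow> 'a set \<Rightarrow> 'a \<Rightarrow> real" where
  "fitness r S v = (if v \<in> S then r else 1)"

definition total_fitness :: "'a set \<Rightarrow> real \<Rightarrow> 'a set \<Rightarrow> real" where
  "total_fitness V r S = (\<Sum>v\<in>V. fitness r S v)"

text \<open>State after vertex v reproduces onto w.\<close>
definition moran_update :: "'a set \<Rightarrow> 'a \<Rightarrow> 'a \<Rightarrow> 'a set" where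
  "moran_update S v w = (if v \<in> S then insert w S else S - {w})"

text \<open>ext_by V E r n S = probability that the Moran process started in state S
  is in the (absorbing) extinct state {} after n steps, i.e. has gone extinct
  by time n.\<close>
fun ext_by :: "'a set \<Rightarrow> ('a \<times> 'a) set \<Rightarrow> real \<Rightarrow> nat \<Rightarrow> 'a set \<Rightarrow> real" where
  "ext_by V E r 0 S = (if S = {} then 1 else 0)"
| "ext_by V E r (Suc n) S =
     (\<Sum>v\<in>V. fitness r S v / total_fitness V r S *
        (\<Sum>w\<in>out_nbrs V E v. (1 / real (card (out_nbrs V E v))) *
            ext_by V E r n (moran_update S v w)))"

definition extinction_prob :: "'a set \<Rightarrow> ('a \<times> 'a) set \<Rightarrow> real \<Rightarrow> 'a set \<Rightarrow> real" where
  "extinction_prob V E r S = (SUP n. ext_by V E r n S)"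

datatype mvert = Centre | Res nat nat | Feeder nat | Cliq nat nat

definition megastar_V :: "nat \<Rightarrow> nat \<Rightarrow> nat \<Rightarrow> mvert set" where
  "megastar_V k l m =
     {Centre} \<union> {Res i j | i j. i < l \<and> j < m} \<union> {Feeder i | i. i < l}
       \<union> {Cliq i j | i j. i < l \<and> j < k}"

definition megastar_E :: "nat \<Rightarrow> nat \<Rightarrow> nat \<Rightarrow> (mvert \<times> mvert) set" where
  "megastar_E k l m =
     {(Centre, Res i j) | i j. i < l \<and> j < m}
     \<union> {(Res i j, Feeder i) | i j. i < l \<and> j < m}
     \<union> {(Feeder i, Cliq i j) | i j. i < l \<and> j < k}
     \<union> {(Cliq i j, Cliq i j') | i j j'. i < l \<and> j < k \<and> j' < k \<and> j \<noteq> j'}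
     \<union> {(Cliq i j, Centre) | i j. i < l \<and> j < k}"

end

theory Submission
  imports Defs
begin


lemma ext_bounds:
  assumes "finite V" "r > 0"
  shows "0 \<le> ext_by V E r n S \<and> ext_by V E r n S \<le> 1"
proof (induction n arbitrary: S)
  case 0 then show ?case by simp
next
  case (Suc n)
  define T where "T = total_fitness V r S"
  have fpos: "\<And>v. fitness r S v > 0" using assms by (simp add: fitness_def)
  have T0: "T \<ge> 0" unfolding T_def total_fitness_def by (meson fpos less_imp_le sum_nonneg)
  define I where "I v = (\<Sum>w\<in>out_nbrs V E v. (1 / real (card (out_nbrs V E v))) * ext_by V E r n (moran_update S v w))" for v
  have I: "0 \<le> I v \<and> I v \<le> 1" for v
  proof -
    have fin: "finite (out_nbrs V E v)" using assms(1) unfolding out_nbrs_def by simp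
    have "0 \<le> I v" unfolding I_def using Suc.IH by (intro sum_nonneg mult_nonneg_nonneg) auto
    moreover have "I v \<le> (\<Sum>w\<in>out_nbrs V E v. 1 / real (card (out_nbrs V E v)))"
      unfolding I_def using Suc.IH by (intro sum_mono) (simp add: divide_right_mono)
    moreover have "(\<Sum>w\<in>out_nbrs V E v. 1 / real (card (out_nbrs V E v))) \<le> 1"
      using fin by (cases "out_nbrs V E v = {}") auto
    ultimately show ?thesis by linarith
  qed
  have eq: "ext_by V E r (Suc n) S = (\<Sum>v\<in>V. fitness r S v / T * I v)" by (simp add: T_def I_def)
  have "0 \<le> (\<Sum>v\<in>V. fitness r S v / T * I v)"
    using T0 fpos I by (intro sum_nonneg mult_nonneg_nonneg divide_nonneg_nonneg) (auto intro: less_imp_le)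
  moreover have "(\<Sum>v\<in>V. fitness r S v / T * I v) \<le> (\<Sum>v\<in>V. fitness r S v / T)"
    using T0 fpos I by (intro sum_mono mult_left_le divide_nonneg_nonneg) (auto intro: less_imp_le)
  moreover have "(\<Sum>v\<in>V. fitness r S v / T) \<le> 1"
  proof (cases "V = {}")
    case False
    have "T > 0" unfolding T_def total_fitness_def using False assms(1) fpos
      by (simp add: sum_pos)
    then show ?thesis by (simp add: sum_divide_distrib[symmetric] T_def total_fitness_def)
  qed simp
  ultimately show ?case using eq by linarith
qed

lemma ext_empty:
  assumes fin: "finite V" and ne: "V \<noteq> {}" and nz: "\<And>v. v \<in> V \<Longrightarrow> out_nbrs V E v \<noteq> {}"
  shows "ext_by V E r n {} = 1"
proof (induction n)
  case (Suc n)
  have T: "total_fitness V r {} = real (card V)" by (simp add: total_fitness_def fitness_def)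
  have I: "(\<Sum>w\<in>out_nbrs V E v. 1 / real (card (out_nbrs V E v)) * ext_by V E r n (moran_update {} v w)) = 1"
    if "v \<in> V" for v
  proof -
    have "finite (out_nbrs V E v)" using fin unfolding out_nbrs_def by simp
    then show ?thesis using Suc nz[OF that] by (simp add: moran_update_def)
  qed
  have "ext_by V E r (Suc n) {} = (\<Sum>v\<in>V. 1 / real (card V))"
    using I T by (simp add: fitness_def)
  then show ?case using fin ne by simp
qed simp

definition drate :: "'a set \<Rightarrow> ('a \<times> 'a) set \<Rightarrow> 'a \<Rightarrow> real" where
  "drate V E x = (\<Sum>v\<in>V-{x}. if x \<in> out_nbrs V E v then 1 / real (card (out_nbrs V E v)) else 0)"

lemma ext_step:
  assumes fin: "finite V" and r: "r > 0" and x: "x \<in> V"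
    and nz: "\<And>v. v \<in> V \<Longrightarrow> out_nbrs V E v \<noteq> {}"
  shows "ext_by V E r (Suc n) {x} \<ge>
     ((real (card V) - 1) * ext_by V E r n {x} + drate V E x * (1 - ext_by V E r n {x})) / (real (card V) - 1 + r)"
proof -
  define p where "p = ext_by V E r n {x}"
  define T where "T = real (card V) - 1 + r"
  have cV: "card V \<ge> 1" using fin x by (metis One_nat_def Suc_leI card_gt_0_iff empty_iff)
  have T: "total_fitness V r {x} = T"
  proof -
    have "total_fitness V r {x} = fitness r {x} x + (\<Sum>v\<in>V-{x}. fitness r {x} v)"
      unfolding total_fitness_def using fin x by (simp add: sum.remove)
    also have "... = r + real (card (V - {x}))" by (simp add: fitness_def)
    also have "... = T" using fin x cV by (simp add: T_def card_Diff_singleton of_nat_diff)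
    finally show ?thesis .
  qed
  have Tpos: "T > 0" using cV r by (simp add: T_def)
  define F where "F v = fitness r {x} v / T * (\<Sum>w\<in>out_nbrs V E v. 1 / real (card (out_nbrs V E v)) * ext_by V E r n (moran_update {x} v w))" for v
  have eq: "ext_by V E r (Suc n) {x} = F x + (\<Sum>v\<in>V-{x}. F v)"
    using fin x by (simp add: F_def T sum.remove)
  have Fx: "F x \<ge> 0" unfolding F_def using ext_bounds[OF fin r] Tpos r
    by (intro mult_nonneg_nonneg sum_nonneg divide_nonneg_nonneg) (auto simp: fitness_def)
  define e where "e v = (if x \<in> out_nbrs V E v then 1 / real (card (out_nbrs V E v)) else 0)" for v
  have ne: "V \<noteq> {}" using x by auto
  have Fv: "F v = (p + e v * (1 - p)) / T" if v: "v \<in> V - {x}" for v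
  proof -
    let ?O = "out_nbrs V E v"
    have finO: "finite ?O" using fin unfolding out_nbrs_def by simp
    have neO: "?O \<noteq> {}" using nz v by auto
    have c: "card ?O \<ge> 1" using finO neO by (simp add: Suc_leI card_gt_0_iff)
    have up: "\<And>w. ext_by V E r n (moran_update {x} v w) = (if w = x then 1 else p)"
      using v ext_empty[OF fin ne nz] by (auto simp: moran_update_def p_def)
    have "(\<Sum>w\<in>?O. 1 / real (card ?O) * ext_by V E r n (moran_update {x} v w)) = p + e v * (1 - p)"
    proof (cases "x \<in> ?O")
      case True
      have "(\<Sum>w\<in>?O. 1 / real (card ?O) * ext_by V E r n (moran_update {x} v w))
          = (\<Sum>w\<in>?O. 1 / real (card ?O) * (if w = x then 1 else p))" by (simp add: up)
      also have "... = 1 / real (card ?O) * 1 + (\<Sum>w\<in>?O-{x}. 1 / real (card ?O) * (if w = x then 1 else p))"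
        using finO True by (simp add: sum.remove)
      also have "(\<Sum>w\<in>?O-{x}. 1 / real (card ?O) * (if w = x then 1 else p)) = (\<Sum>w\<in>?O-{x}. 1 / real (card ?O) * p)"
        by (rule sum.cong) auto
      also have "... = (real (card ?O) - 1) * (1 / real (card ?O) * p)"
        using finO True c by (simp add: card_Diff_singleton of_nat_diff)
      finally show ?thesis using True c by (simp add: e_def field_simps)
    next
      case False
      have "(\<Sum>w\<in>?O. 1 / real (card ?O) * ext_by V E r n (moran_update {x} v w))
          = (\<Sum>w\<in>?O. 1 / real (card ?O) * p)" using False by (intro sum.cong) (auto simp: up)
      also have "... = p" using c by simp
      finally show ?thesis using False by (simp add: e_def)
    qed
    then show ?thesis using v by (simp add: F_def fitness_def)
  qed
  have "(\<Sum>v\<in>V-{x}. F v) = (\<Sum>v\<in>V-{x}. (p + e v * (1 - p)) / T)" by (rule sum.cong) (auto simp: Fv)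
  also have "... = (real (card (V - {x})) * p + drate V E x * (1 - p)) / T"
    by (simp add: sum_divide_distrib[symmetric] sum.distrib sum_distrib_right[symmetric] drate_def e_def)
  also have "real (card (V - {x})) = real (card V) - 1" using fin x cV by (simp add: card_Diff_singleton of_nat_diff)
  finally show ?thesis using eq Fx by (simp add: p_def T_def)
qed

lemma seq_lb:
  fixes p :: "nat \<Rightarrow> real"
  assumes A: "A \<ge> 0" and d: "d \<ge> 0" and r: "r > 0" and p0: "p 0 \<ge> 0"
    and step: "\<And>n. p (Suc n) \<ge> (A * p n + d) / (A + d + r)"
  shows "p n \<ge> d / (d + r) * (1 - (A / (A + d + r)) ^ n)"
proof (induction n)
  case 0 then show ?case using p0 by simp
next
  case (Suc n)
  define c where "c = d / (d + r)"
  define T where "T = A + d + r"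
  have T: "T > 0" using A d r by (simp add: T_def)
  have "(A * (c * (1 - (A / T) ^ n)) + d) / T \<le> (A * p n + d) / T"
    using Suc A T by (intro divide_right_mono add_right_mono mult_left_mono) (auto simp: c_def T_def)
  also have "... \<le> p (Suc n)" using step by (simp add: T_def)
  finally have 1: "(A * (c * (1 - (A / T) ^ n)) + d) / T \<le> p (Suc n)" .
  have cd: "c * (d + r) = d" using d r by (simp add: c_def)
  have "(A * (c * (1 - (A / T) ^ n)) + d) / T = (A * c + d) / T - c * (A / T) ^ Suc n"
    using T by (simp add: field_simps)
  also have "(A * c + d) / T = c" using T cd by (simp add: T_def field_simps)
  finally show ?case using 1 by (simp add: c_def T_def right_diff_distrib)
qed

lemma sup_lb:
  fixes p :: "nat \<Rightarrow> real"
  assumes bdd: "\<And>n. p n \<le> 1" and lb: "\<And>n. p n \<ge> c * (1 - s^n)" and s: "0 \<le> s" "s < 1"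
  shows "(SUP n. p n) \<ge> c"
proof -
  have bd: "bdd_above (range p)" using bdd by (auto intro!: bdd_aboveI[where M=1])
  have "(\<lambda>n. c * (1 - s^n)) \<longlonglongrightarrow> c * (1 - 0)"
    using s by (intro tendsto_intros LIMSEQ_power_zero) auto
  then have "(\<lambda>n. c * (1 - s^n)) \<longlonglongrightarrow> c" by simp
  then show ?thesis
  proof (rule LIMSEQ_le_const2)
    show "\<exists>N. \<forall>n\<ge>N. c * (1 - s ^ n) \<le> (SUP n. p n)"
      using lb bd by (meson cSUP_upper2 UNIV_I)
  qed
qed

lemma ext_single:
  assumes fin: "finite V" and r: "r > 0" and x: "x \<in> V"
    and nz: "\<And>v. v \<in> V \<Longrightarrow> out_nbrs V E v \<noteq> {}"
  shows "extinction_prob V E r {x} \<ge> drate V E x / (drate V E x + r)"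
proof -
  define d where "d = drate V E x"
  define A where "A = real (card V) - 1 - d"
  define p where "p n = ext_by V E r n {x}" for n
  have d0: "d \<ge> 0" unfolding d_def drate_def by (intro sum_nonneg) auto
  have "d \<le> (\<Sum>v\<in>V-{x}. 1)" unfolding d_def drate_def
  proof (intro sum_mono)
    fix v assume v: "v \<in> V - {x}"
    have "finite (out_nbrs V E v)" using fin unfolding out_nbrs_def by simp
    then have "card (out_nbrs V E v) \<ge> 1" using nz v by (simp add: Suc_leI card_gt_0_iff)
    then show "(if x \<in> out_nbrs V E v then 1 / real (card (out_nbrs V E v)) else 0) \<le> 1" by simp
  qed
  also have "... = real (card V) - 1" using fin x
    by (simp add: card_Diff_singleton of_nat_diff Suc_leI card_gt_0_iff) (metis One_nat_def Suc_leI card_gt_0_iff empty_iff of_nat_1 of_nat_diff)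
  finally have A0: "A \<ge> 0" by (simp add: A_def)
  have step: "p (Suc n) \<ge> (A * p n + d) / (A + d + r)" for n
    using ext_step[OF fin r x nz, of n] by (simp add: A_def d_def p_def algebra_simps)
  have lb: "p n \<ge> d / (d + r) * (1 - (A / (A + d + r)) ^ n)" for n
    proof (rule seq_lb[OF A0 d0 r])
    show "0 \<le> p 0" using ext_bounds[OF fin r] by (simp add: p_def)
  qed (rule step)
  have "(SUP n. p n) \<ge> d / (d + r)"
    by (rule sup_lb[OF _ lb]) (use ext_bounds[OF fin r] p_def A0 d0 r in auto)
  then show ?thesis by (simp add: extinction_prob_def p_def d_def)
qed



lemma V_eq: "megastar_V k l m = insert Centre ((\<lambda>(i,j). Res i j) ` ({..<l}\<times>{..<m}) \<union> Feeder ` {..<l}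
   \<union> (\<lambda>(i,j). Cliq i j) ` ({..<l}\<times>{..<k}))"
  unfolding megastar_V_def by auto

lemma finV: "finite (megastar_V k l m)" unfolding V_eq by simp

lemma cardV: "card (megastar_V k l m) \<le> 1 + l*m + l + l*k"
proof -
  have "card (megastar_V k l m) \<le> 1 + card ((\<lambda>(i,j). Res i j) ` ({..<l}\<times>{..<m}) \<union> Feeder ` {..<l}
   \<union> (\<lambda>(i,j). Cliq i j) ` ({..<l}\<times>{..<k}))" unfolding V_eq by (rule card_insert_le_m1) auto
  also have "card ((\<lambda>(i,j). Res i j) ` ({..<l}\<times>{..<m}) \<union> Feeder ` {..<l}
   \<union> (\<lambda>(i,j). Cliq i j) ` ({..<l}\<times>{..<k})) \<le> l*m + l + l*k"
  proof -
    have 1: "card ((\<lambda>(i,j). Res i j) ` ({..<l}\<times>{..<m})) \<le> l*m"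
      by (rule order_trans[OF card_image_le]) auto
    have 2: "card (Feeder ` {..<l}) \<le> l" by (rule order_trans[OF card_image_le]) auto
    have 3: "card ((\<lambda>(i,j). Cliq i j) ` ({..<l}\<times>{..<k})) \<le> l*k"
      by (rule order_trans[OF card_image_le]) auto
    show ?thesis using 1 2 3 card_Un_le by (meson add_mono order_trans)
  qed
  finally show ?thesis by simp
qed

lemma out_Centre: "out_nbrs (megastar_V k l m) (megastar_E k l m) Centre = (\<lambda>(i,j). Res i j) ` ({..<l}\<times>{..<m})"
  unfolding out_nbrs_def megastar_V_def megastar_E_def by auto
lemma out_Res: "i < l \<Longrightarrow> j < m \<Longrightarrow> out_nbrs (megastar_V k l m) (megastar_E k l m) (Res i j) = {Feeder i}"
  unfolding out_nbrs_def megastar_V_def megastar_E_def by auto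
lemma out_Feeder: "i < l \<Longrightarrow> out_nbrs (megastar_V k l m) (megastar_E k l m) (Feeder i) = Cliq i ` {..<k}"
  unfolding out_nbrs_def megastar_V_def megastar_E_def by auto
lemma out_Cliq: "i < l \<Longrightarrow> j < k \<Longrightarrow> out_nbrs (megastar_V k l m) (megastar_E k l m) (Cliq i j) = insert Centre (Cliq i ` ({..<k} - {j}))"
  unfolding out_nbrs_def megastar_V_def megastar_E_def by auto

lemma nz: assumes "k > 0" "l > 0" "m > 0" "v \<in> megastar_V k l m"
  shows "out_nbrs (megastar_V k l m) (megastar_E k l m) v \<noteq> {}"
proof -
  have "v \<in> insert Centre ((\<lambda>(i,j). Res i j) ` ({..<l}\<times>{..<m}) \<union> Feeder ` {..<l}
   \<union> (\<lambda>(i,j). Cliq i j) ` ({..<l}\<times>{..<k}))" using assms(4) by (simp add: V_eq)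
  then show ?thesis using assms(1-3) by (auto simp: out_Centre out_Res out_Feeder out_Cliq)
qed

lemma card_Feeder: "i < l \<Longrightarrow> card (out_nbrs (megastar_V k l m) (megastar_E k l m) (Feeder i)) = k"
  by (simp add: out_Feeder card_image inj_on_def)
lemma card_Cliq: "i < l \<Longrightarrow> j < k \<Longrightarrow> card (out_nbrs (megastar_V k l m) (megastar_E k l m) (Cliq i j)) = k"
proof -
  assume a: "i < l" "j < k"
  have "card (Cliq i ` ({..<k} - {j})) = k - 1" using a by (simp add: card_image inj_on_def)
  then show ?thesis using a by (auto simp: out_Cliq card_insert_if)
qed

lemma drate_mono:
  assumes "D \<subseteq> V - {x}" "finite V"
  shows "drate V E x \<ge> (\<Sum>v\<in>D. if x \<in> out_nbrs V E v then 1 / real (card (out_nbrs V E v)) else 0)"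
  unfolding drate_def using assms by (intro sum_mono2) auto

lemma cardC1: "card (Cliq i ` {..<k}) = k" by (simp add: card_image inj_on_def)
lemma cardC2: "j < k \<Longrightarrow> card (insert Centre (Cliq i ` ({..<k} - {j}))) = k"
proof -
  assume a: "j < k"
  have "card (Cliq i ` ({..<k} - {j})) = k - 1" using a by (simp add: card_image inj_on_def)
  then show ?thesis using a by (auto simp: card_insert_if)
qed

abbreviation "MV k l m \<equiv> megastar_V k l m"
abbreviation "ME k l m \<equiv> megastar_E k l m"

lemma drate_Cliq: assumes "i < l" "j < k" shows "drate (MV k l m) (ME k l m) (Cliq i j) \<ge> 1"
proof -
  define D where "D = insert (Feeder i) (Cliq i ` ({..<k} - {j}))"
  have sub: "D \<subseteq> MV k l m - {Cliq i j}" using assms unfolding D_def megastar_V_def by auto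
  have "(\<Sum>v\<in>D. if Cliq i j \<in> out_nbrs (MV k l m) (ME k l m) v then 1 / real (card (out_nbrs (MV k l m) (ME k l m) v)) else 0)
      = (\<Sum>v\<in>D. 1 / real k)"
    using assms by (intro sum.cong) (auto simp: D_def out_Feeder out_Cliq cardC1 cardC2)
  also have "card D = k" using assms unfolding D_def by (auto simp: card_insert_if card_image inj_on_def)
  then have "(\<Sum>v\<in>D. 1 / real k) = 1" using assms by simp
  finally show ?thesis using drate_mono[OF sub finV, where E="ME k l m"] by simp
qed

lemma drate_Feeder: assumes "i < l" shows "drate (MV k l m) (ME k l m) (Feeder i) \<ge> real m"
proof -
  define D where "D = Res i ` {..<m}"
  have sub: "D \<subseteq> MV k l m - {Feeder i}" using assms unfolding D_def megastar_V_def by auto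
  have "(\<Sum>v\<in>D. if Feeder i \<in> out_nbrs (MV k l m) (ME k l m) v then 1 / real (card (out_nbrs (MV k l m) (ME k l m) v)) else 0)
      = (\<Sum>v\<in>D. 1)"
    using assms by (intro sum.cong) (auto simp: D_def out_Res)
  also have "card D = m" unfolding D_def by (auto simp: card_image inj_on_def)
  then have "(\<Sum>v\<in>D. 1) = real m" by simp
  finally show ?thesis using drate_mono[OF sub finV, where E="ME k l m"] by simp
qed

lemma drate_Centre: assumes "k > 0" shows "drate (MV k l m) (ME k l m) Centre \<ge> real l"
proof -
  define D where "D = (\<lambda>(i,j). Cliq i j) ` ({..<l}\<times>{..<k})"
  have sub: "D \<subseteq> MV k l m - {Centre}" unfolding D_def megastar_V_def by auto
  have "(\<Sum>v\<in>D. if Centre \<in> out_nbrs (MV k l m) (ME k l m) v then 1 / real (card (out_nbrs (MV k l m) (ME k l m) v)) else 0)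
      = (\<Sum>v\<in>D. 1 / real k)"
    by (intro sum.cong) (auto simp: D_def out_Cliq cardC2)
  also have "card D = l * k" unfolding D_def by (subst card_image) (auto simp: inj_on_def)
  then have "(\<Sum>v\<in>D. 1 / real k) = real l" using assms by simp
  finally show ?thesis using drate_mono[OF sub finV, where E="ME k l m"] by simp
qed

lemma ext_lb:
  assumes "k > 0" "l > 0" "m > 0" "r > 0" "x \<in> MV k l m" "d0 \<ge> 0" "d0 \<le> drate (MV k l m) (ME k l m) x"
  shows "extinction_prob (MV k l m) (ME k l m) r {x} \<ge> d0 / (d0 + r)"
proof -
  let ?d = "drate (MV k l m) (ME k l m) x"
  have "d0 / (d0 + r) \<le> ?d / (?d + r)"
    using assms(4,6,7) by (simp add: divide_simps) (simp add: algebra_simps mult_right_mono)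
  also have "... \<le> extinction_prob (MV k l m) (ME k l m) r {x}"
    using ext_single[OF finV assms(4,5)] nz[OF assms(1-3)] by blast
  finally show ?thesis .
qed



lemma arith1: assumes "r > 1" "(m::real) \<ge> 1" shows "m / (m + r) \<ge> 1 / (2 * r)"
proof -
  have "(r - 1) * (m - 1) \<ge> 0" using assms by simp
  moreover have "r * m \<ge> 1 * 1" using assms by (intro mult_mono) auto
  ultimately have "m + r \<le> 2 * r * m" by (simp add: algebra_simps)
  then show ?thesis using assms by (simp add: divide_simps mult.commute mult.left_commute)
qed

lemma arith2: assumes "r > 1" "l \<ge> (0::real)" "k \<ge> 0" shows "l * k / (1 + r) \<ge> l * k / (2 * r)"
  using assms by (intro divide_left_mono mult_nonneg_nonneg) auto

lemma arith3: assumes "r > 1" "(k::real) \<ge> 1" "m \<ge> 1" "l \<ge> 0"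
  shows "(1 + l*m + l + l*k) * k / (2 * r * (m + k)) \<le> l * k / (2 * r) + l / (2 * r) + 1 / (2*r)"
proof -
  have "(1 + l*m + l + l*k) * k / (2 * r * (m + k)) = l * k / (2 * r) + (1 + l) * (k / (m + k)) / (2 * r)"
  proof -
    have "(1 + l*m + l + l*k) * k = l * k * (m + k) + (1 + l) * k" by (simp add: algebra_simps)
    then have "(1 + l*m + l + l*k) * k / (2 * r * (m + k)) = l * k * (m + k) / (2 * r * (m + k)) + (1 + l) * k / (2 * r * (m + k))"
      by (simp add: add_divide_distrib)
    also have "l * k * (m + k) / (2 * r * (m + k)) = l * k / (2 * r)" using assms by simp
    also have "(1 + l) * k / (2 * r * (m + k)) = (1 + l) * (k / (m + k)) / (2 * r)" by simp
    finally show ?thesis .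
  qed
  also have "(1 + l) * (k / (m + k)) \<le> (1 + l) * 1" using assms by (intro mult_left_mono) auto
  then have "(1 + l) * (k / (m + k)) / (2 * r) \<le> (1 + l) / (2 * r)" 
  proof -
    have "2 * r \<ge> 0" using assms by simp
    with \<open>(1 + l) * (k / (m + k)) \<le> (1 + l) * 1\<close> have "(1 + l) * (k / (m + k)) / (2 * r) \<le> (1 + l) * 1 / (2 * r)"
      by (rule divide_right_mono)
    then show ?thesis by simp
  qed
  finally show ?thesis using assms by (simp add: add_divide_distrib)
qed

theorem lemma7p1:
  fixes r :: real and k l m :: nat
  assumes "r > 1" and "k > 0" and "l > 0" and "m > 0"
  shows "(\<Sum>x0\<in>megastar_V k l m.
            extinction_prob (megastar_V k l m) (megastar_E k l m) r {x0})
           / real (card (megastar_V k l m))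
         \<ge> real k / (2 * r * (real m + real k))"
proof -
  define P where "P x = extinction_prob (MV k l m) (ME k l m) r {x}" for x
  have r0: "r > 0" using assms by simp
  have P0: "P x \<ge> 0" if "x \<in> MV k l m" for x
    using ext_lb[OF assms(2,3,4) r0 that, of 0] drate_mono[of "{}" "MV k l m" x "ME k l m"] finV
    by (simp add: P_def drate_def sum_nonneg)
  define Fe where "Fe = Feeder ` {..<l}"
  define Cl where "Cl = (\<lambda>(i,j). Cliq i j) ` ({..<l}\<times>{..<k})"
  have W: "insert Centre (Fe \<union> Cl) \<subseteq> MV k l m" unfolding Fe_def Cl_def megastar_V_def by auto
  have fFe: "finite Fe" "finite Cl" by (auto simp: Fe_def Cl_def)
  have "(\<Sum>x\<in>MV k l m. P x) \<ge> (\<Sum>x\<in>insert Centre (Fe \<union> Cl). P x)"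
    using W P0 finV by (intro sum_mono2) auto
  also have "(\<Sum>x\<in>insert Centre (Fe \<union> Cl). P x) = P Centre + ((\<Sum>x\<in>Fe. P x) + (\<Sum>x\<in>Cl. P x))"
    using fFe by (subst sum.insert) (auto simp: Fe_def Cl_def intro!: sum.union_disjoint)
  finally have S: "(\<Sum>x\<in>MV k l m. P x) \<ge> P Centre + ((\<Sum>x\<in>Fe. P x) + (\<Sum>x\<in>Cl. P x))" .
  have PC: "P Centre \<ge> real l / (real l + r)"
    using ext_lb[OF assms(2,3,4) r0 _ _ drate_Centre] assms by (simp add: P_def megastar_V_def)
  have "(\<Sum>x\<in>Fe. P x) \<ge> real (card Fe) * (real m / (real m + r))"
  proof (rule sum_bounded_below)
    fix x assume "x \<in> Fe"
    then obtain i where i: "i < l" "x = Feeder i" by (auto simp: Fe_def)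
    show "real m / (real m + r) \<le> P x"
      using ext_lb[OF assms(2,3,4) r0 _ _ drate_Feeder[OF i(1)]] i by (simp add: P_def megastar_V_def)
  qed
  moreover have "card Fe = l" by (simp add: Fe_def card_image inj_on_def)
  ultimately have PF: "(\<Sum>x\<in>Fe. P x) \<ge> real l * (real m / (real m + r))" by simp
  have "(\<Sum>x\<in>Cl. P x) \<ge> real (card Cl) * (1 / (1 + r))"
  proof (rule sum_bounded_below)
    fix x assume "x \<in> Cl"
    then obtain i j where i: "i < l" "j < k" "x = Cliq i j" by (auto simp: Cl_def)
    show "1 / (1 + r) \<le> P x"
      using ext_lb[OF assms(2,3,4) r0 _ _ drate_Cliq[OF i(1,2)]] i by (simp add: P_def megastar_V_def)
  qed
  moreover have "card Cl = l * k" unfolding Cl_def by (subst card_image) (auto simp: inj_on_def)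
  ultimately have PCl: "(\<Sum>x\<in>Cl. P x) \<ge> real l * real k / (1 + r)" by simp
  have a1: "real l * (real m / (real m + r)) \<ge> real l * (1 / (2 * r))"
    using arith1[of r "real m"] assms by (intro mult_left_mono) auto
  have a2: "real l / (real l + r) \<ge> 1 / (2 * r)" using arith1[of r "real l"] assms by auto
  have a3: "real l * real k / (1 + r) \<ge> real l * real k / (2 * r)" using arith2[of r "real l" "real k"] assms by auto
  have a4: "(1 + real l * real m + real l + real l * real k) * real k / (2 * r * (real m + real k))
      \<le> real l * real k / (2 * r) + real l / (2 * r) + 1 / (2 * r)"
    using arith3[of r "real k" "real m" "real l"] assms by auto
  define N where "N = card (MV k l m)"
  have N: "real N \<le> 1 + real l * real m + real l + real l * real k"
    using cardV[of k l m] unfolding N_def by (metis of_nat_1 of_nat_add of_nat_le_iff of_nat_mult)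
  have Npos: "N > 0" unfolding N_def using finV by (simp add: card_gt_0_iff megastar_V_def)
  have q0: "real k / (2 * r * (real m + real k)) \<ge> 0" using assms by simp
  have "real N * (real k / (2 * r * (real m + real k)))
      \<le> (1 + real l * real m + real l + real l * real k) * (real k / (2 * r * (real m + real k)))"
    using N q0 by (rule mult_right_mono)
  also have "... \<le> (\<Sum>x\<in>MV k l m. P x)"
    using S PC PF PCl a1 a2 a3 a4 by (simp add: times_divide_eq_right)
  finally have "real N * (real k / (2 * r * (real m + real k))) \<le> (\<Sum>x\<in>MV k l m. P x)" .
  then show ?thesis using Npos unfolding N_def P_def by (simp add: pos_le_divide_eq mult.commute)
qed

end
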